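(* Let $H_1,\dots,H_k$ and $F$ be fixed graphs. Then, as $n\to\infty$, $\mathrm{ex}(n,(H_1,\dots,H_k),F)=\Theta(\max_{i\le k}\mathrm{ex}(n,H_i,F))$ and $\mathrm{ex}^{\mathrm{col}}(n,(H_1,\dots,H_k),F)=\Theta(\max_{i\le k}\mathrm{ex}(n,H_i,F))$.
   Context: For graphs $H,G$, $\mathcal N(H,G)$ denotes the number of (not necessarily induced) subgraphs of $G$ isomorphic to $H$. $\mathrm{ex}(n,H,F)$ is the maximum of $\mathcal N(H,G)$ over all $F$-free graphs $G$ on $n$ vertices. $\mathrm{ex}(n,(H_1,\dots,H_k),F)$ is the maximum of $\sum_{i=1}^k\mathcal N(H_i,G)$ over all $F$-free graphs $G$ on $n$ vertices. For a graph $G$ whose edges are colored with colors $1,\dots,k$, let $G_i$ be the subgraph consisting of the edges of color $i$; $\mathrm{ex}^{\mathrm{col}}(n,(H_1,\dots,H_k),F)$ is the maximum of $\sum_{i=1}^k \mathcal N(H_i,G_i)$ over all $F$-free graphs $G$ on $n$ vertices and all colorings of their edges with colors $1,\dots,k$. *)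

theory Defs
  imports Main "HOL-Library.Landau_Symbols" "HOL-Library.FuncSet"
begin

type_synonym 'a graph = "'a set \<times> 'a set set"

definition verts :: "'a graph \<Rightarrow> 'a set" where "verts G = fst G"
definition edges :: "'a graph \<Rightarrow> 'a set set" where "edges G = snd G"

definition all_edges :: "'a set \<Rightarrow> 'a set set" where
  "all_edges V = {e. \<exists>u v. u \<in> V \<and> v \<in> V \<and> u \<noteq> v \<and> e = {u, v}}"

definition wf_graph :: "'a graph \<Rightarrow> bool" where
  "wf_graph G \<longleftrightarrow> finite (verts G) \<and> edges G \<subseteq> all_edges (verts G)"

definition graph_iso :: "'a graph \<Rightarrow> 'b graph \<Rightarrow> bool" where
  "graph_iso G G' \<longleftrightarrow> (\<exists>f. bij_betw f (verts G) (verts G') \<and>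
     (\<forall>u\<in>verts G. \<forall>v\<in>verts G. {u, v} \<in> edges G \<longleftrightarrow> {f u, f v} \<in> edges G'))"

text \<open>N(H,G): number of (not necessarily induced) subgraphs of G isomorphic to H.\<close>
definition count_sub :: "'a graph \<Rightarrow> 'b graph \<Rightarrow> nat" where
  "count_sub H G = card {S :: 'b graph. wf_graph S \<and> verts S \<subseteq> verts G \<and>
      edges S \<subseteq> edges G \<and> graph_iso H S}"

definition free :: "'a graph \<Rightarrow> 'b graph \<Rightarrow> bool" where
  "free F G \<longleftrightarrow> count_sub F G = 0"

definition host_graphs :: "'b graph \<Rightarrow> nat \<Rightarrow> nat graph set" where
  "host_graphs F n = {G. verts G = {0..<n} \<and> wf_graph G \<and> free F G}"

text \<open>ex(n,(H_0,...,H_{k-1}),F); the max of an empty family is taken as 0.\<close>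
definition ex_multi :: "nat \<Rightarrow> (nat \<Rightarrow> 'a graph) \<Rightarrow> nat \<Rightarrow> 'b graph \<Rightarrow> nat" where
  "ex_multi k H n F = Max (insert 0 {(\<Sum>i<k. count_sub (H i) G) | G. G \<in> host_graphs F n})"

definition ex_single :: "nat \<Rightarrow> 'a graph \<Rightarrow> 'b graph \<Rightarrow> nat" where
  "ex_single n H F = Max (insert 0 {count_sub H G | G. G \<in> host_graphs F n})"

definition colour_class :: "nat graph \<Rightarrow> (nat set \<Rightarrow> nat) \<Rightarrow> nat \<Rightarrow> nat graph" where
  "colour_class G c i = (verts G, {e \<in> edges G. c e = i})"

definition ex_col :: "nat \<Rightarrow> (nat \<Rightarrow> 'a graph) \<Rightarrow> nat \<Rightarrow> 'b graph \<Rightarrow> nat" where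
  "ex_col k H n F = Max (insert 0 {(\<Sum>i<k. count_sub (H i) (colour_class G c i)) | G c.
      G \<in> host_graphs F n \<and> c \<in> edges G \<rightarrow>\<^sub>E {..<k}})"

end

theory Submission
  imports Defs
begin

lemma host_finite: "finite (host_graphs F n)"
proof -
  have "host_graphs F n \<subseteq> (\<lambda>E. ({0..<n}, E)) ` Pow (Pow {0..<n})"
  proof
    fix G assume "G \<in> host_graphs F n"
    hence v: "verts G = {0..<n}" and w: "wf_graph G" by (auto simp: host_graphs_def)
    have "edges G \<subseteq> Pow {0..<n}" using w v by (auto simp: wf_graph_def all_edges_def)
    moreover have "G = ({0..<n}, edges G)" using v by (cases G) (auto simp: verts_def edges_def)
    ultimately show "G \<in> (\<lambda>E. ({0..<n}, E)) ` Pow (Pow {0..<n})" by blast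
  qed
  thus ?thesis by (rule finite_subset) auto
qed

lemma sub_finite:
  assumes "finite (verts G)" "finite (edges G)"
  shows "finite {S :: 'b graph. wf_graph S \<and> verts S \<subseteq> verts G \<and>
      edges S \<subseteq> edges G \<and> graph_iso H S}"
proof -
  have "{S :: 'b graph. wf_graph S \<and> verts S \<subseteq> verts G \<and>
      edges S \<subseteq> edges G \<and> graph_iso H S} \<subseteq> Pow (verts G) \<times> Pow (edges G)"
    by (auto simp: verts_def edges_def)
  thus ?thesis by (rule finite_subset) (use assms in auto)
qed

lemma count_mono:
  assumes "wf_graph G" "verts G' = verts G" "edges G' \<subseteq> edges G"
  shows "count_sub H G' \<le> count_sub H G"
proof -
  have fe: "finite (edges G)"
  proof -
    have "edges G \<subseteq> Pow (verts G)" using assms(1) by (auto simp: wf_graph_def all_edges_def)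
    thus ?thesis using assms(1) by (meson finite_Pow_iff finite_subset wf_graph_def)
  qed
  show ?thesis unfolding count_sub_def
    by (rule card_mono[OF sub_finite[OF _ fe]]) (use assms in \<open>auto simp: wf_graph_def\<close>)
qed

lemma fin_compr: "finite A \<Longrightarrow> finite {f x | x. x \<in> A}"
  by (simp add: Setcompr_eq_image)

lemma fin_compr2: "finite {f i | i. i < (k::nat)}"
  by simp

lemma le_ex_single:
  assumes "G \<in> host_graphs F n"
  shows "count_sub H G \<le> ex_single n H F"
  unfolding ex_single_def
proof (rule Max_ge)
  show "finite (insert 0 {count_sub H G |G. G \<in> host_graphs F n})"
    using fin_compr[OF host_finite, of "count_sub H" F n] by blast
  show "count_sub H G \<in> insert 0 {count_sub H G |G. G \<in> host_graphs F n}"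
    using assms by blast
qed

lemma ex_single_cases:
  "ex_single n H F = 0 \<or> (\<exists>G \<in> host_graphs F n. ex_single n H F = count_sub H G)"
proof -
  have fin: "finite (insert 0 {count_sub H G | G. G \<in> host_graphs F n})"
    using fin_compr[OF host_finite] by blast
  have "ex_single n H F \<in> insert 0 {count_sub H G | G. G \<in> host_graphs F n}"
    unfolding ex_single_def by (rule Max_in[OF fin]) auto
  thus ?thesis by auto
qed

lemma M_cases:
  fixes M k :: nat and H :: "nat \<Rightarrow> 'a graph"
  assumes "M = Max (insert 0 {ex_single n (H i) F | i. i < k})"
  shows "M = 0 \<or> (\<exists>i<k. M = ex_single n (H i) F)"
proof -
  have fin: "finite (insert 0 {ex_single n (H i) F | i. i < k})"
    using fin_compr2[of "\<lambda>i. ex_single n (H i) F" k] by blast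
  have "M \<in> insert 0 {ex_single n (H i) F | i. i < k}"
    unfolding assms by (rule Max_in[OF fin]) auto
  thus ?thesis by auto
qed

lemma le_M:
  fixes k :: nat and H :: "nat \<Rightarrow> 'a graph"
  assumes "i < k"
  shows "ex_single n (H i) F \<le> Max (insert 0 {ex_single n (H i) F | i. i < k})"
proof (rule Max_ge)
  show "finite (insert 0 {ex_single n (H i) F | i. i < k})"
    using fin_compr2[of "\<lambda>i. ex_single n (H i) F" k] by blast
  show "ex_single n (H i) F \<in> insert 0 {ex_single n (H i) F | i. i < k}"
    using assms by blast
qed

lemma bounds:
  fixes k n :: nat and H :: "nat \<Rightarrow> 'a graph" and F :: "'b graph"
  defines "M \<equiv> Max (insert 0 {ex_single n (H i) F | i. i < k})"
  shows "M \<le> ex_multi k H n F \<and> ex_multi k H n F \<le> k * M \<and>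
         M \<le> ex_col k H n F \<and> ex_col k H n F \<le> k * M"
proof -
  define A where "A = {(\<Sum>i<k. count_sub (H i) G) | G. G \<in> host_graphs F n}"
  define B where "B = {(\<Sum>i<k. count_sub (H i) (colour_class G c i)) | G c.
      G \<in> host_graphs F n \<and> c \<in> edges G \<rightarrow>\<^sub>E {..<k}}"
  have Ab: "x \<le> k * M" if xA: "x \<in> A" for x
  proof -
    obtain G where G: "G \<in> host_graphs F n" "x = (\<Sum>i<k. count_sub (H i) G)"
      using xA unfolding A_def by blast
    have "x \<le> (\<Sum>i<k. M)" unfolding G(2)
    proof (rule sum_mono)
      fix i assume "i \<in> {..<k}"
      thus "count_sub (H i) G \<le> M" unfolding M_def
        using le_ex_single[OF G(1)] le_M[of i k n H F] by (meson lessThan_iff order.trans)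
    qed
    thus ?thesis by simp
  qed
  have Bb: "x \<le> k * M" if xB: "x \<in> B" for x
  proof -
    obtain G c where G: "G \<in> host_graphs F n" "x = (\<Sum>i<k. count_sub (H i) (colour_class G c i))"
      using xB unfolding B_def by blast
    have w: "wf_graph G" using G(1) by (simp add: host_graphs_def)
    have "x \<le> (\<Sum>i<k. M)" unfolding G(2)
    proof (rule sum_mono)
      fix i assume "i \<in> {..<k}"
      have "count_sub (H i) (colour_class G c i) \<le> count_sub (H i) G"
        by (rule count_mono[OF w]) (auto simp: colour_class_def verts_def edges_def)
      thus "count_sub (H i) (colour_class G c i) \<le> M" unfolding M_def
        using le_ex_single[OF G(1)] le_M[of i k n H F] \<open>i \<in> {..<k}\<close>
        by (meson lessThan_iff order.trans)
    qed
    thus ?thesis by simp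
  qed
  have finA: "finite (insert 0 A)" by (rule finite_subset[of _ "{..k*M}"]) (use Ab in auto)
  have finB: "finite (insert 0 B)" by (rule finite_subset[of _ "{..k*M}"]) (use Bb in auto)
  have em: "ex_multi k H n F = Max (insert 0 A)" unfolding ex_multi_def A_def ..
  have ec: "ex_col k H n F = Max (insert 0 B)" unfolding ex_col_def B_def ..
  have 1: "ex_multi k H n F \<le> k * M" unfolding em using finA Ab by (subst Max_le_iff) auto
  have 2: "ex_col k H n F \<le> k * M" unfolding ec using finB Bb by (subst Max_le_iff) auto
  have 3: "M \<le> ex_multi k H n F \<and> M \<le> ex_col k H n F"
  proof (cases "M = 0")
    case False
    then obtain i where i: "i < k" "M = ex_single n (H i) F" using M_cases[OF M_def[THEN meta_eq_to_obj_eq]] by auto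
    show ?thesis
    proof (cases "ex_single n (H i) F = 0")
      case True thus ?thesis using i by simp
    next
      case False
      then obtain G where G: "G \<in> host_graphs F n" "ex_single n (H i) F = count_sub (H i) G"
        using ex_single_cases[of n "H i" F] by (metis (no_types))
      have "count_sub (H i) G \<le> (\<Sum>j<k. count_sub (H j) G)"
        by (rule member_le_sum) (use i in auto)
      also have "\<dots> \<le> ex_multi k H n F" unfolding em
        by (rule Max_ge[OF finA]) (unfold A_def, use G in blast)
      finally have m: "M \<le> ex_multi k H n F" using i G by simp
      define c where "c = (\<lambda>e. if e \<in> edges G then i else undefined)"
      have c: "c \<in> edges G \<rightarrow>\<^sub>E {..<k}" using i by (auto simp: c_def)
      have cc: "colour_class G c i = G"
        by (cases G) (auto simp: colour_class_def c_def verts_def edges_def)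
      have "count_sub (H i) G = count_sub (H i) (colour_class G c i)" using cc by simp
      also have "\<dots> \<le> (\<Sum>j<k. count_sub (H j) (colour_class G c j))"
        by (rule member_le_sum) (use i in auto)
      also have "\<dots> \<le> ex_col k H n F" unfolding ec
        by (rule Max_ge[OF finB]) (use G c B_def in blast)
      finally have "M \<le> ex_col k H n F" using i G by simp
      with m show ?thesis by simp
    qed
  qed simp
  show ?thesis using 1 2 3 by simp
qed

theorem mainTheorem2:
  fixes k :: nat and H :: "nat \<Rightarrow> 'a graph" and F :: "'b graph"
  assumes "\<forall>i<k. wf_graph (H i)" and "wf_graph F"
  shows "(\<lambda>n. real (ex_multi k H n F)) \<in> \<Theta>(\<lambda>n. real (Max (insert 0 {ex_single n (H i) F | i. i < k}))) \<and>
         (\<lambda>n. real (ex_col k H n F)) \<in> \<Theta>(\<lambda>n. real (Max (insert 0 {ex_single n (H i) F | i. i < k})))"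
proof
  show "(\<lambda>n. real (ex_multi k H n F)) \<in> \<Theta>(\<lambda>n. real (Max (insert 0 {ex_single n (H i) F | i. i < k})))"
  proof (rule bigthetaI'[of 1 "real k + 1"])
    show "\<forall>\<^sub>F x in at_top. 1 * norm (real (Max (insert 0 {ex_single x (H i) F | i. i < k})))
        \<le> norm (real (ex_multi k H x F)) \<and> norm (real (ex_multi k H x F))
        \<le> (real k + 1) * norm (real (Max (insert 0 {ex_single x (H i) F | i. i < k})))"
    proof (rule always_eventually, rule allI)
      fix n
      have b: "Max (insert 0 {ex_single n (H i) F | i. i < k}) \<le> ex_multi k H n F"
        "ex_multi k H n F \<le> k * Max (insert 0 {ex_single n (H i) F | i. i < k})"
        using bounds[where k=k and n=n and H=H and F=F] by auto
      have "real (ex_multi k H n F) \<le> real k * real (Max (insert 0 {ex_single n (H i) F | i. i < k}))"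
        using b(2) of_nat_mono by fastforce
      thus "1 * norm (real (Max (insert 0 {ex_single n (H i) F | i. i < k})))
        \<le> norm (real (ex_multi k H n F)) \<and> norm (real (ex_multi k H n F))
        \<le> (real k + 1) * norm (real (Max (insert 0 {ex_single n (H i) F | i. i < k})))"
        using b(1) by (simp add: algebra_simps)
    qed
  qed simp_all
  show "(\<lambda>n. real (ex_col k H n F)) \<in> \<Theta>(\<lambda>n. real (Max (insert 0 {ex_single n (H i) F | i. i < k})))"
  proof (rule bigthetaI'[of 1 "real k + 1"])
    show "\<forall>\<^sub>F x in at_top. 1 * norm (real (Max (insert 0 {ex_single x (H i) F | i. i < k})))
        \<le> norm (real (ex_col k H x F)) \<and> norm (real (ex_col k H x F))
        \<le> (real k + 1) * norm (real (Max (insert 0 {ex_single x (H i) F | i. i < k})))"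
    proof (rule always_eventually, rule allI)
      fix n
      have b: "Max (insert 0 {ex_single n (H i) F | i. i < k}) \<le> ex_col k H n F"
        "ex_col k H n F \<le> k * Max (insert 0 {ex_single n (H i) F | i. i < k})"
        using bounds[where k=k and n=n and H=H and F=F] by auto
      have "real (ex_col k H n F) \<le> real k * real (Max (insert 0 {ex_single n (H i) F | i. i < k}))"
        using b(2) of_nat_mono by fastforce
      thus "1 * norm (real (Max (insert 0 {ex_single n (H i) F | i. i < k})))
        \<le> norm (real (ex_col k H n F)) \<and> norm (real (ex_col k H n F))
        \<le> (real k + 1) * norm (real (Max (insert 0 {ex_single n (H i) F | i. i < k})))"
        using b(1) by (simp add: algebra_simps)
    qed
  qed simp_all
qed

end
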